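(* Let $S$ be a finite generating subset of $\mathbb{Z}^k$. There exists a constant $C>0$ such that for every injective group homomorphism $\varphi:\mathbb{Z}^k\to\mathbb{Z}^k$ and every $x\in\mathbb{Z}^k$, $$\|x\|_S\le C\,\frac{(\max\{\|\varphi\|_S,\|\varphi(x)\|_S\})^k}{|\det(\varphi)|}.$$
   Context: $\|\cdot\|_S$ is word length with respect to $S$, $\|\varphi\|_S=\max_{s\in S}\|\varphi(s)\|_S$, and $\det(\varphi)$ is the determinant of the integer matrix representing $\varphi$. *)

theory Defs
  imports "HOL-Analysis.Analysis"
begin

text \<open>Since Z^k is abelian, a word in S \<union> S^-1 evaluates to
  a linear combination with integer coefficients; the word length is the minimal
  total absolute value of the coefficients.\<close>

definition generates :: "(int ^ 'k) set \<Rightarrow> bool" where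
  "generates S \<longleftrightarrow> (\<forall>x. \<exists>c :: int ^ 'k \<Rightarrow> int. x = (\<Sum>s\<in>S. c s *s s))"

definition word_length :: "(int ^ 'k) set \<Rightarrow> int ^ 'k \<Rightarrow> nat" where
  "word_length S x = (LEAST n. \<exists>c :: int ^ 'k \<Rightarrow> int.
      x = (\<Sum>s\<in>S. c s *s s) \<and> int n = (\<Sum>s\<in>S. \<bar>c s\<bar>))"

definition hom_norm :: "(int ^ 'k) set \<Rightarrow> (int ^ 'k \<Rightarrow> int ^ 'k) \<Rightarrow> nat" where
  "hom_norm S \<phi> = Max ((\<lambda>s. word_length S (\<phi> s)) ` S)"

definition is_group_hom :: "(int ^ 'k \<Rightarrow> int ^ 'k) \<Rightarrow> bool" where
  "is_group_hom \<phi> \<longleftrightarrow> (\<forall>x y. \<phi> (x + y) = \<phi> x + \<phi> y)"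

definition hom_matrix :: "(int ^ 'k \<Rightarrow> int ^ 'k) \<Rightarrow> int ^ 'k ^ 'k" where
  "hom_matrix \<phi> = (\<chi> i j. \<phi> (axis j 1) $ i)"

end

theory Submission imports Defs begin

definition qmat :: "int^'n^'m \<Rightarrow> rat^'n^'m" where
  "qmat A = (\<chi> i j. of_int (A$i$j))"
definition qvec :: "int^'n \<Rightarrow> rat^'n" where
  "qvec x = (\<chi> i. of_int (x$i))"

lemma det_qmat: "det (qmat A) = of_int (det (A::int^'n^'n))"
  unfolding det_def qmat_def by (simp add: of_int_sum of_int_mult of_int_prod)

lemma qmat_mult: "qmat A *v qvec x = qvec (A *v x)"
  by (simp add: qmat_def qvec_def matrix_vector_mult_def vec_eq_iff of_int_sum)

lemma cramer_int:
  fixes A :: "int^'n^'n"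
  shows "det((\<chi> i j. if j = k then (A *v x)$i else A$i$j)) = x$k * det A"
proof -
  have "of_int (det((\<chi> i j. if j = k then (A *v x)$i else A$i$j))) =
     det((\<chi> i j. if j = k then (qmat A *v qvec x)$i else qmat A$i$j))"
    unfolding det_qmat[symmetric] qmat_mult by (rule arg_cong[where f=det]) (simp add: qmat_def qvec_def vec_eq_iff)
  also have "\<dots> = qvec x $ k * det (qmat A)" by (rule cramer_lemma)
  also have "\<dots> = of_int (x$k * det A)" by (simp add: qvec_def det_qmat)
  finally show ?thesis by linarith
qed

lemma hom_zero: "is_group_hom \<phi> \<Longrightarrow> \<phi> 0 = 0"
  unfolding is_group_hom_def by (metis add.right_neutral add_left_cancel)

lemma hom_neg: assumes "is_group_hom \<phi>" shows "\<phi> (- v) = - \<phi> v"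
proof -
  have "\<phi> (-v) + \<phi> v = \<phi> (-v + v)" using assms unfolding is_group_hom_def by metis
  also have "\<dots> = 0" using hom_zero[OF assms] by simp
  finally show ?thesis by (simp add: eq_neg_iff_add_eq_0)
qed

lemma hom_nat: "is_group_hom \<phi> \<Longrightarrow> \<phi> (int n *s v) = int n *s \<phi> v"
proof (induction n)
  case 0 then show ?case using hom_zero by (simp add: vec_eq_iff)
next
  case (Suc n)
  have "int (Suc n) *s v = int n *s v + v" by (simp add: vec_eq_iff algebra_simps)
  moreover have "int (Suc n) *s \<phi> v = int n *s \<phi> v + \<phi> v" by (simp add: vec_eq_iff algebra_simps)
  ultimately show ?case using Suc unfolding is_group_hom_def by simp
qed

lemma hom_smult: assumes "is_group_hom \<phi>" shows "\<phi> (c *s v) = c *s \<phi> v"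
proof (cases "c \<ge> 0")
  case True
  then obtain n where "c = int n" using nonneg_int_cases by blast
  then show ?thesis using hom_nat[OF assms] by simp
next
  case False
  then have "c = - int (nat (-c))" using False by simp
  then obtain n where n: "c = - int n" by blast
  have "c *s v = - (int n *s v)" "c *s \<phi> v = - (int n *s \<phi> v)" using n by (auto simp: vec_eq_iff)
  then show ?thesis using hom_nat[OF assms] hom_neg[OF assms] by simp
qed

lemma hom_sum: assumes "is_group_hom \<phi>" "finite A"
  shows "\<phi> (\<Sum>s\<in>A. c s *s f s) = (\<Sum>s\<in>A. c s *s \<phi> (f s))"
  using assms(2)
proof (induction A rule: finite_induct)
  case empty then show ?case using hom_zero[OF assms(1)] by simp
next
  case (insert a A) then show ?case using assms(1) hom_smult[OF assms(1)] unfolding is_group_hom_def by simp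
qed

lemma basis_expand: "x = (\<Sum>j\<in>UNIV. x$j *s axis j (1::int))"
  by (simp add: vec_eq_iff axis_def if_distrib cong: if_cong)

lemma hom_matrix_works: assumes "is_group_hom \<phi>" shows "\<phi> x = hom_matrix \<phi> *v x"
proof -
  have "\<phi> x = (\<Sum>j\<in>UNIV. x$j *s \<phi> (axis j 1))"
    by (subst basis_expand) (rule hom_sum[OF assms], simp)
  then show ?thesis by (simp add: vec_eq_iff hom_matrix_def matrix_vector_mult_def mult.commute)
qed

lemma clear_denoms: fixes v :: "rat^'n"
  shows "\<exists>d::int. d > 0 \<and> (\<forall>i. \<exists>a::int. of_int d * v$i = of_int a)"
proof -
  define b where "b i = snd (quotient_of (v$i))" for i
  define d where "d = (\<Prod>i\<in>UNIV. b i)"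
  have bpos: "b i > 0" for i unfolding b_def
    by (metis prod.collapse quotient_of_denom_pos)
  have "d > 0" unfolding d_def using bpos by (simp add: prod_pos)
  moreover have "\<exists>a::int. of_int d * v$i = of_int a" for i
  proof -
    have vi: "v$i = of_int (fst (quotient_of (v$i))) / of_int (b i)" unfolding b_def
      by (metis prod.collapse quotient_of_div)
    have "b i dvd d" unfolding d_def by (rule dvd_prodI) auto
    then obtain k where k: "d = b i * k" by (auto simp: dvd_def)
    have "of_int d * v$i = of_int (k * fst (quotient_of (v$i)))"
      using bpos[of i] by (subst vi) (simp add: k field_simps)
    then show ?thesis by blast
  qed
  ultimately show ?thesis by blast
qed

lemma qvec_inj: "qvec x = qvec y \<Longrightarrow> x = y"
  by (simp add: qvec_def vec_eq_iff)

lemma det_nonzero: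
  assumes "is_group_hom \<phi>" "inj \<phi>"
  shows "det (hom_matrix \<phi>) \<noteq> 0"
proof
  assume d0: "det (hom_matrix \<phi>) = 0"
  define A where "A = hom_matrix \<phi>"
  have "det (qmat A) = 0" using d0 by (simp add: det_qmat A_def)
  then have "\<not> inj ((*v) (qmat A))"
    using det_nz_iff_inj_gen[OF matrix_vector_mul_linear_gen[of "qmat A"]] by simp
  then obtain u w where uw: "u \<noteq> w" "qmat A *v u = qmat A *v w" unfolding inj_def by blast
  define v where "v = u - w"
  have v0: "v \<noteq> 0" and Av: "qmat A *v v = 0" using uw by (auto simp: v_def matrix_vector_mult_diff_distrib)
  obtain d where dpos: "d > 0" and da: "\<forall>i. \<exists>a::int. of_int d * v$i = of_int a"
    using clear_denoms by blast
  then obtain a where a: "\<And>i. of_int d * v$i = of_int (a i)" by metis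
  define z where "z = (\<chi> i. a i)"
  have qz: "qvec z = of_int d *s v" by (simp add: qvec_def z_def vec_eq_iff a)
  have sc: "qmat A *v (c *s y) = c *s (qmat A *v y)" for c y
    by (simp add: matrix_vector_mult_def vec_eq_iff sum_distrib_left algebra_simps)
  have "qvec (A *v z) = qvec 0"
    unfolding qmat_mult[symmetric] qz sc Av by (simp add: qvec_def vec_eq_iff)
  then have "A *v z = 0" by (rule qvec_inj)
  then have "\<phi> z = \<phi> 0" using hom_matrix_works[OF assms(1)] hom_zero[OF assms(1)] A_def by simp
  then have "z = 0" using assms(2) by (simp add: inj_def)
  then have "qvec z = 0" by (simp add: qvec_def vec_eq_iff)
  then show False using qz dpos v0 by (simp add: vec_eq_iff)
qed

lemma det_bound:
  fixes B :: "int^'n^'n"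
  assumes "\<And>i j. \<bar>B$i$j\<bar> \<le> R"
  shows "\<bar>det B\<bar> \<le> int (card {p. p permutes (UNIV::'n set)}) * R ^ CARD('n)"
proof -
  have "\<bar>det B\<bar> \<le> (\<Sum>p\<in>{p. p permutes (UNIV::'n set)}. \<bar>of_int (sign p) * (\<Prod>i\<in>UNIV. B$i$p i)\<bar>)"
    unfolding det_def by (rule sum_abs)
  also have "\<dots> \<le> (\<Sum>p\<in>{p. p permutes (UNIV::'n set)}. R ^ CARD('n))"
  proof (rule sum_mono)
    fix p
    have "\<bar>of_int (sign p) * (\<Prod>i\<in>UNIV. B$i$p i)\<bar> = (\<Prod>i\<in>UNIV. \<bar>B$i$p i\<bar>)"
      by (simp add: abs_mult sign_def abs_prod)
    also have "\<dots> \<le> (\<Prod>i\<in>(UNIV::'n set). R)"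
      by (rule prod_mono) (use assms in auto)
    finally show "\<bar>of_int (sign p) * (\<Prod>i\<in>UNIV. B$i$p i)\<bar> \<le> R ^ CARD('n)" by simp
  qed
  also have "\<dots> = int (card {p. p permutes (UNIV::'n set)}) * R ^ CARD('n)" by simp
  finally show ?thesis .
qed

lemma wl_attain:
  assumes "generates S"
  shows "\<exists>c. x = (\<Sum>s\<in>S. c s *s s) \<and> int (word_length S x) = (\<Sum>s\<in>S. \<bar>c s\<bar>)"
proof -
  obtain c where c: "x = (\<Sum>s\<in>S. c s *s s)" using assms unfolding generates_def by blast
  let ?P = "\<lambda>n. \<exists>c :: int ^ 'a \<Rightarrow> int. x = (\<Sum>s\<in>S. c s *s s) \<and> int n = (\<Sum>s\<in>S. \<bar>c s\<bar>)"
  have "?P (nat (\<Sum>s\<in>S. \<bar>c s\<bar>))" using c by (intro exI[of _ c]) (simp add: sum_nonneg)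
  then have "?P (LEAST n. ?P n)" by (rule LeastI)
  then show ?thesis unfolding word_length_def .
qed

lemma wl_le:
  assumes "x = (\<Sum>s\<in>S. c s *s s)"
  shows "int (word_length S x) \<le> (\<Sum>s\<in>S. \<bar>c s\<bar>)"
proof -
  let ?P = "\<lambda>n. \<exists>c :: int ^ 'a \<Rightarrow> int. x = (\<Sum>s\<in>S. c s *s s) \<and> int n = (\<Sum>s\<in>S. \<bar>c s\<bar>)"
  have "?P (nat (\<Sum>s\<in>S. \<bar>c s\<bar>))" using assms by (intro exI[of _ c]) (simp add: sum_nonneg)
  then have "(LEAST n. ?P n) \<le> nat (\<Sum>s\<in>S. \<bar>c s\<bar>)" by (rule Least_le)
  then show ?thesis unfolding word_length_def using sum_nonneg[of S "\<lambda>s. \<bar>c s\<bar>"] by (simp add: le_nat_iff)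
qed

lemma comp_bound:
  fixes c :: "'b \<Rightarrow> int" and w :: "'b \<Rightarrow> int^'n"
  assumes "v = (\<Sum>s\<in>S. c s *s w s)" "\<And>s. s \<in> S \<Longrightarrow> \<bar>w s $ i\<bar> \<le> b"
  shows "\<bar>v$i\<bar> \<le> (\<Sum>s\<in>S. \<bar>c s\<bar>) * b"
proof -
  have "\<bar>v$i\<bar> = \<bar>\<Sum>s\<in>S. c s * w s $ i\<bar>" using assms(1) by simp
  also have "\<dots> \<le> (\<Sum>s\<in>S. \<bar>c s * w s $ i\<bar>)" by (rule sum_abs)
  also have "\<dots> \<le> (\<Sum>s\<in>S. \<bar>c s\<bar> * b)"
    by (rule sum_mono) (simp add: abs_mult assms(2) mult_left_mono)
  finally show ?thesis by (simp add: sum_distrib_right)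
qed

lemma wl_upper:
  assumes "generates S"
  shows "int (word_length S x) \<le> (\<Sum>j\<in>UNIV. \<bar>x$j\<bar> * int (word_length S (axis j 1)))"
proof -
  have ex: "\<forall>j. \<exists>c. axis j 1 = (\<Sum>s\<in>S. c s *s s) \<and>
      int (word_length S (axis j 1)) = (\<Sum>s\<in>S. \<bar>c s\<bar>)"
    using wl_attain[OF assms] by blast
  obtain d where d: "\<And>j. axis j 1 = (\<Sum>s\<in>S. d j s *s s) \<and>
      int (word_length S (axis j 1)) = (\<Sum>s\<in>S. \<bar>d j s\<bar>)"
    using choice[OF ex] by blast
  have d2: "\<And>j. int (word_length S (axis j 1)) = (\<Sum>s\<in>S. \<bar>d j s\<bar>)" using d by blast
  have "x = (\<Sum>s\<in>S. (\<Sum>j\<in>UNIV. x$j * d j s) *s s)"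
  proof -
    have xe: "x = (\<Sum>j\<in>UNIV. x$j *s (\<Sum>s\<in>S. d j s *s s))"
      using basis_expand[of x] d by simp
    have xi: "x$i = (\<Sum>j\<in>UNIV. x$j * (\<Sum>s\<in>S. d j s * s$i))" for i
      using arg_cong[where f="\<lambda>v. v$i", OF xe] by (simp only: sum_component vector_smult_component)
    have sw: "(\<Sum>s\<in>S. (\<Sum>j\<in>UNIV. x$j * d j s) * s$i) = (\<Sum>j\<in>UNIV. x$j * (\<Sum>s\<in>S. d j s * s$i))" for i
    proof -
      have "(\<Sum>s\<in>S. (\<Sum>j\<in>UNIV. x$j * d j s) * s$i) = (\<Sum>s\<in>S. \<Sum>j\<in>UNIV. x$j * d j s * s$i)"
        by (simp add: sum_distrib_right)
      also have "\<dots> = (\<Sum>j\<in>UNIV. \<Sum>s\<in>S. x$j * d j s * s$i)" by (rule sum.swap)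
      also have "\<dots> = (\<Sum>j\<in>UNIV. x$j * (\<Sum>s\<in>S. d j s * s$i))"
        by (simp add: sum_distrib_left mult.assoc)
      finally show ?thesis .
    qed
    show ?thesis
    unfolding vec_eq_iff
    proof
      fix i
      have "(\<Sum>s\<in>S. (\<Sum>j\<in>UNIV. x$j * d j s) *s s)$i = (\<Sum>s\<in>S. (\<Sum>j\<in>UNIV. x$j * d j s) * s$i)"
        by simp
      then show "x$i = (\<Sum>s\<in>S. (\<Sum>j\<in>UNIV. x$j * d j s) *s s)$i"
        using xi[of i] sw[of i] by linarith
    qed
  qed
  then have "int (word_length S x) \<le> (\<Sum>s\<in>S. \<bar>\<Sum>j\<in>UNIV. x$j * d j s\<bar>)" by (rule wl_le)
  also have "\<dots> \<le> (\<Sum>s\<in>S. \<Sum>j\<in>UNIV. \<bar>x$j\<bar> * \<bar>d j s\<bar>)"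
    by (rule sum_mono) (metis (no_types, lifting) abs_mult sum.cong sum_abs)
  also have "\<dots> = (\<Sum>j\<in>UNIV. \<Sum>s\<in>S. \<bar>x$j\<bar> * \<bar>d j s\<bar>)"
    by (rule sum.swap)
  also have "\<dots> = (\<Sum>j\<in>UNIV. \<bar>x$j\<bar> * (\<Sum>s\<in>S. \<bar>d j s\<bar>))"
    by (simp add: sum_distrib_left)
  also have "\<dots> = (\<Sum>j\<in>UNIV. \<bar>x$j\<bar> * int (word_length S (axis j 1)))"
    by (simp only: d2)
  finally show ?thesis .
qed

theorem mainTheorem10:
  fixes S :: "(int ^ 'k) set"
  assumes "finite S" and "generates S"
  shows "\<exists>C > (0::real). \<forall>\<phi> :: int ^ 'k \<Rightarrow> int ^ 'k. is_group_hom \<phi> \<and> inj \<phi> \<longrightarrow>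
           (\<forall>x. real (word_length S x) \<le>
              C * real (max (hom_norm S \<phi>) (word_length S (\<phi> x))) ^ CARD('k)
                / \<bar>real_of_int (det (hom_matrix \<phi>))\<bar>)"
proof -
  define K where "K = CARD('k)"
  define N where "N = int (card {p. p permutes (UNIV::'k set)})"
  define B0 where "B0 = (\<Sum>s\<in>S. \<Sum>i\<in>UNIV. \<bar>s$i\<bar>)"
  define L where "L = (\<Sum>j\<in>UNIV. int (word_length S (axis j (1::int) :: int^'k)))"
  define C0 where "C0 = L * int K * N * (B0 * (L + 1)) ^ K"
  have B0nn: "B0 \<ge> 0" unfolding B0_def by (simp add: sum_nonneg)
  have Lnn: "L \<ge> 0" unfolding L_def by (simp add: sum_nonneg)
  have Nnn: "N \<ge> 0" unfolding N_def by simp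
  have C0nn: "C0 \<ge> 0" unfolding C0_def using B0nn Lnn Nnn by simp
  have sB0: "\<bar>s$i\<bar> \<le> B0" if "s \<in> S" for s i
  proof -
    have "\<bar>s$i\<bar> \<le> (\<Sum>i\<in>UNIV. \<bar>s$i\<bar>)" by (rule member_le_sum) auto
    also have "\<dots> \<le> B0" unfolding B0_def
      by (rule member_le_sum) (use that assms(1) in \<open>auto intro: sum_nonneg\<close>)
    finally show ?thesis .
  qed
  have compB: "\<bar>y$i\<bar> \<le> int (word_length S y) * B0" for y i
  proof -
    obtain c where c: "y = (\<Sum>s\<in>S. c s *s s)" "int (word_length S y) = (\<Sum>s\<in>S. \<bar>c s\<bar>)"
      using wl_attain[OF assms(2)] by blast
    show ?thesis using comp_bound[where w="\<lambda>s. s" and b=B0 and i=i, OF c(1)] sB0 c(2) by simp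
  qed
  have Lj: "int (word_length S (axis j (1::int) :: int^'k)) \<le> L" for j
    unfolding L_def by (rule member_le_sum) auto
  show ?thesis
  proof (intro exI[of _ "real_of_int C0 + 1"] conjI allI impI)
    show "real_of_int C0 + 1 > 0" using C0nn by simp
    fix \<phi> :: "int^'k \<Rightarrow> int^'k" and x
    assume hom: "is_group_hom \<phi> \<and> inj \<phi>"
    define A where "A = hom_matrix \<phi>"
    define M where "M = int (max (hom_norm S \<phi>) (word_length S (\<phi> x)))"
    define R where "R = B0 * (L + 1) * M"
    have Mnn: "M \<ge> 0" unfolding M_def by simp
    have dA: "det A \<noteq> 0" unfolding A_def using det_nonzero hom by blast
    have hn: "int (word_length S (\<phi> s)) \<le> M" if "s \<in> S" for s
    proof -
      have "word_length S (\<phi> s) \<le> hom_norm S \<phi>" unfolding hom_norm_def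
        using assms(1) that by (intro Max_ge) auto
      then show ?thesis unfolding M_def by linarith
    qed
    have phix: "\<bar>\<phi> x $ i\<bar> \<le> R" for i
    proof -
      have "\<bar>\<phi> x $ i\<bar> \<le> int (word_length S (\<phi> x)) * B0" by (rule compB)
      also have "\<dots> \<le> M * B0" unfolding M_def using B0nn by (intro mult_right_mono) auto
      also have "\<dots> \<le> R"
      proof -
        have "M * B0 * 1 \<le> M * B0 * (L + 1)"
          using B0nn Lnn Mnn by (intro mult_left_mono) auto
        then show ?thesis by (simp add: R_def algebra_simps)
      qed
      finally show ?thesis .
    qed
    have Aent: "\<bar>A$i$j\<bar> \<le> R" for i j
    proof -
      obtain c where c: "axis j 1 = (\<Sum>s\<in>S. c s *s s)" "int (word_length S (axis j (1::int))) = (\<Sum>s\<in>S. \<bar>c s\<bar>)"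
        using wl_attain[OF assms(2)] by blast
      have pe: "\<phi> (axis j 1) = (\<Sum>s\<in>S. c s *s \<phi> s)"
        using c(1) hom_sum[OF conjunct1[OF hom] assms(1), of c "\<lambda>s. s"] by simp
      have bd: "\<bar>\<phi> s $ i\<bar> \<le> M * B0" if "s \<in> S" for s
      proof -
        have "\<bar>\<phi> s $ i\<bar> \<le> int (word_length S (\<phi> s)) * B0" by (rule compB)
        also have "\<dots> \<le> M * B0" using hn[OF that] B0nn by (rule mult_right_mono)
        finally show ?thesis .
      qed
      have "\<bar>A$i$j\<bar> = \<bar>\<phi> (axis j 1) $ i\<bar>" unfolding A_def hom_matrix_def by simp
      also have "\<dots> \<le> (\<Sum>s\<in>S. \<bar>c s\<bar>) * (M * B0)" by (rule comp_bound[OF pe bd])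
      also have "\<dots> \<le> L * (M * B0)" using c(2) Lj[of j] Mnn B0nn by (intro mult_right_mono) auto
      also have "\<dots> \<le> R" unfolding R_def using B0nn Lnn Mnn by (simp add: algebra_simps mult_nonneg_nonneg)
      finally show ?thesis .
    qed
    have xk: "\<bar>x$k\<bar> * \<bar>det A\<bar> \<le> N * R ^ K" for k
    proof -
      have "\<bar>x$k\<bar> * \<bar>det A\<bar> = \<bar>det((\<chi> i j. if j = k then (A *v x)$i else A$i$j))\<bar>"
        by (simp add: cramer_int abs_mult)
      also have "\<dots> \<le> N * R ^ K" unfolding N_def K_def
        by (rule det_bound) (use Aent phix hom_matrix_works[OF conjunct1[OF hom]] A_def in auto)
      finally show ?thesis .
    qed
    have "int (word_length S x) * \<bar>det A\<bar> \<le> (\<Sum>j\<in>UNIV. \<bar>x$j\<bar> * L) * \<bar>det A\<bar>"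
    proof (rule mult_right_mono)
      have "int (word_length S x) \<le> (\<Sum>j\<in>UNIV. \<bar>x$j\<bar> * int (word_length S (axis j 1)))"
        by (rule wl_upper[OF assms(2)])
      also have "\<dots> \<le> (\<Sum>j\<in>UNIV. \<bar>x$j\<bar> * L)"
        by (rule sum_mono) (simp add: Lj mult_left_mono)
      finally show "int (word_length S x) \<le> (\<Sum>j\<in>UNIV. \<bar>x$j\<bar> * L)" .
    qed simp
    also have "\<dots> = L * (\<Sum>j\<in>UNIV. \<bar>x$j\<bar> * \<bar>det A\<bar>)"
      by (simp add: sum_distrib_left sum_distrib_right algebra_simps)
    also have "\<dots> \<le> L * (\<Sum>j\<in>(UNIV::'k set). N * R ^ K)"
      using Lnn xk by (intro mult_left_mono sum_mono) auto
    also have "\<dots> = C0 * M ^ K"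
    proof -
      have r: "R ^ K = (B0 * (L + 1)) ^ K * M ^ K" unfolding R_def by (simp add: power_mult_distrib)
      have "(\<Sum>j\<in>(UNIV::'k set). N * R ^ K) = int K * (N * R ^ K)" unfolding K_def by simp
      then show ?thesis unfolding C0_def r by (simp add: algebra_simps)
    qed
    finally have key: "int (word_length S x) * \<bar>det A\<bar> \<le> C0 * M ^ K" .
    have keyr: "real (word_length S x) * \<bar>real_of_int (det A)\<bar> \<le> (real_of_int C0 + 1) * real_of_int M ^ K"
    proof -
      have "real (word_length S x) * \<bar>real_of_int (det A)\<bar> \<le> real_of_int C0 * real_of_int M ^ K"
      proof -
        have "real_of_int (int (word_length S x) * \<bar>det A\<bar>) \<le> real_of_int (C0 * M ^ K)"
          using key by (simp only: of_int_le_iff)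
        then show ?thesis by simp
      qed
      also have "\<dots> \<le> (real_of_int C0 + 1) * real_of_int M ^ K"
        using Mnn by (intro mult_right_mono) auto
      finally show ?thesis .
    qed
    have "real_of_int M = real (max (hom_norm S \<phi>) (word_length S (\<phi> x)))" unfolding M_def by simp
    then show "real (word_length S x) \<le>
              (real_of_int C0 + 1) * real (max (hom_norm S \<phi>) (word_length S (\<phi> x))) ^ CARD('k)
                / \<bar>real_of_int (det (hom_matrix \<phi>))\<bar>"
      using keyr dA unfolding A_def K_def by (simp add: pos_le_divide_eq)
  qed
qed

end
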